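(* Let $(f,g)$ be a discrete Ribaucour pair of $(\mathfrak{m}^1,\mathfrak{m}^2)$-type. Then $f$ and $g$ are both spherical curves, i.e. for each of them there is a sphere (possibly a plane) containing all of its points.
   Context: Light cone model: $\mathbb{R}^{4,2}$ with a form $\langle\cdot,\cdot\rangle$ of signature $(4,2)$, light cone $\mathcal{L}$, $\mathbb{P}(\mathcal{L})$; fixed $\mathfrak{p}$ with $\langle\mathfrak{p},\mathfrak{p}\rangle=-1$; $v$ with $\langle\mathfrak{v},\mathfrak{p}\rangle=0$ are points of $\mathbb{R}^3\cup\{\infty\}$, others oriented spheres (planes included); incidence = orthogonality. Inversion in $\mathfrak{a}$: $\sigma_a(x)=x-\frac{2\langle x,\mathfrak{a}\rangle}{\langle\mathfrak{a},\mathfrak{a}\rangle}\mathfrak{a}$; M-inversion if $\mathfrak{a}\perp\mathfrak{p}$; $\sigma_a$ fixes exactly the vectors orthogonal to $\mathfrak{a}$. Discrete curves are maps from consecutive integers to points. A Ribaucour pair $(f,g)$: $f_i,f_j,g_j,g_i$ concircular for each edge $(ij)$; with representatives satisfying $\mathfrak{f}_i-\mathfrak{f}_j+\mathfrak{g}_j-\mathfrak{g}_i=0$ its R-evolution map consists of the M-inversions in $\mathfrak{r}_{ij}=\mathfrak{f}_i-\mathfrak{f}_j$. The pair is of $(\mathfrak{m}^1,\mathfrak{m}^2)$-type if $\mathrm{span}\{\mathfrak{m}^1,\mathfrak{m}^2,\mathfrak{p}\}$ is a 3-dimensional subspace consisting of fixed points of all inversions of the R-evolution map. *)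

theory Defs
  imports "HOL-Analysis.Analysis"
begin

text \<open>The space R^{4,2}: real^6 with the form of signature (4,2),
  coordinates 0..3 positive, coordinates 4,5 negative.\<close>
definition lform :: "real^6 \<Rightarrow> real^6 \<Rightarrow> real" where
  "lform x y = x$0*y$0 + x$1*y$1 + x$2*y$2 + x$3*y$3 - x$4*y$4 - x$5*y$5"

text \<open>Inversion in a (defined when a is not null).\<close>
definition inversion :: "real^6 \<Rightarrow> real^6 \<Rightarrow> real^6" where
  "inversion a x = x - (2 * lform x a / lform a a) *\<^sub>R a"

definition M_inversion :: "real^6 \<Rightarrow> real^6 \<Rightarrow> bool" where
  "M_inversion p a \<longleftrightarrow> lform a a \<noteq> 0 \<and> lform a p = 0"

text \<open>Representatives of elements of P(L): nonzero null vectors.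
  Those orthogonal to p are points, the others oriented spheres (planes included).\<close>
definition is_point :: "real^6 \<Rightarrow> real^6 \<Rightarrow> bool" where
  "is_point p v \<longleftrightarrow> v \<noteq> 0 \<and> lform v v = 0 \<and> lform v p = 0"

definition is_sphere :: "real^6 \<Rightarrow> real^6 \<Rightarrow> bool" where
  "is_sphere p s \<longleftrightarrow> s \<noteq> 0 \<and> lform s s = 0 \<and> lform s p \<noteq> 0"

definition consecutive :: "int set \<Rightarrow> bool" where
  "consecutive I \<longleftrightarrow> (\<forall>i\<in>I. \<forall>j\<in>I. \<forall>k. i \<le> k \<and> k \<le> j \<longrightarrow> k \<in> I)"

definition discrete_curve :: "real^6 \<Rightarrow> int set \<Rightarrow> (int \<Rightarrow> real^6) \<Rightarrow> bool" where
  "discrete_curve p I f \<longleftrightarrow> consecutive I \<and> (\<forall>i\<in>I. is_point p (f i))"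

definition concircular :: "real^6 \<Rightarrow> real^6 \<Rightarrow> real^6 \<Rightarrow> real^6 \<Rightarrow> bool" where
  "concircular a b c d \<longleftrightarrow> dim (span {a, b, c, d}) \<le> 3"

text \<open>Ribaucour pair given by representatives normalised so that
  f_i - f_j + g_j - g_i = 0 on every edge (i, i+1); its R-evolution map consists of
  the M-inversions in r_ij = f_i - f_j.\<close>
definition ribaucour_pair :: "real^6 \<Rightarrow> int set \<Rightarrow> (int \<Rightarrow> real^6) \<Rightarrow> (int \<Rightarrow> real^6) \<Rightarrow> bool" where
  "ribaucour_pair p I f g \<longleftrightarrow> discrete_curve p I f \<and> discrete_curve p I g \<and>
     (\<forall>i. i \<in> I \<and> i + 1 \<in> I \<longrightarrow>
        concircular (f i) (f (i+1)) (g (i+1)) (g i) \<and>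
        f i - f (i+1) + g (i+1) - g i = 0 \<and>
        M_inversion p (f i - f (i+1)))"

definition of_type :: "real^6 \<Rightarrow> int set \<Rightarrow> (int \<Rightarrow> real^6) \<Rightarrow> (int \<Rightarrow> real^6)
    \<Rightarrow> real^6 \<Rightarrow> real^6 \<Rightarrow> bool" where
  "of_type p I f g m1 m2 \<longleftrightarrow> dim (span {m1, m2, p}) = 3 \<and>
     (\<forall>i. i \<in> I \<and> i + 1 \<in> I \<longrightarrow>
        (\<forall>x\<in>span {m1, m2, p}. inversion (f i - f (i+1)) x = x))"

definition spherical :: "real^6 \<Rightarrow> int set \<Rightarrow> (int \<Rightarrow> real^6) \<Rightarrow> bool" where
  "spherical p I f \<longleftrightarrow> (\<exists>s. is_sphere p s \<and> (\<forall>i\<in>I. lform (f i) s = 0))"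

end

theory Submission
  imports Defs
begin

lemma exhaust_6:
  fixes x :: 6
  shows "x = 0 \<or> x = 1 \<or> x = 2 \<or> x = 3 \<or> x = 4 \<or> x = 5"
proof (induct x)
  case (of_int z)
  then have "z = 0 \<or> z = 1 \<or> z = 2 \<or> z = 3 \<or> z = 4 \<or> z = 5" by fastforce
  then show ?case by auto
qed

lemma lform_sym: "lform x y = lform y x"
  by (simp add: lform_def algebra_simps)

lemma lform_lin3: "lform (a *\<^sub>R x + b *\<^sub>R y + c *\<^sub>R z) w = a * lform x w + b * lform y w + c * lform z w"
  by (simp add: lform_def algebra_simps)

lemma lform_lin2: "lform (a *\<^sub>R x + b *\<^sub>R y) w = a * lform x w + b * lform y w"
  by (simp add: lform_def algebra_simps)

lemma lform_lin3r: "lform w (a *\<^sub>R x + b *\<^sub>R y + c *\<^sub>R z) = a * lform w x + b * lform w y + c * lform w z"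
  by (simp add: lform_def algebra_simps)

lemma lform_lin2r: "lform w (a *\<^sub>R x + b *\<^sub>R y) = a * lform w x + b * lform w y"
  by (simp add: lform_def algebra_simps)

lemma lform_diff: "lform (x - y) w = lform x w - lform y w"
  by (simp add: lform_def algebra_simps)

lemma lform_zero[simp]: "lform 0 w = 0"
  by (simp add: lform_def)

lemma kernel3:
  fixes a1 a2 a3 b1 b2 b3 :: real
  shows "\<exists>x y z. (x \<noteq> 0 \<or> y \<noteq> 0 \<or> z \<noteq> 0) \<and> a1*x+a2*y+a3*z = 0 \<and> b1*x+b2*y+b3*z = 0"
proof (cases "a2*b3-a3*b2 \<noteq> 0 \<or> a3*b1-a1*b3 \<noteq> 0 \<or> a1*b2-a2*b1 \<noteq> 0")
  case True
  show ?thesis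
    by (rule exI[of _ "a2*b3-a3*b2"], rule exI[of _ "a3*b1-a1*b3"], rule exI[of _ "a1*b2-a2*b1"])
       (use True in \<open>auto simp: algebra_simps\<close>)
next
  case False
  hence c1: "a2*b3 = a3*b2" and c2: "a3*b1 = a1*b3" and c3: "a1*b2 = a2*b1" by auto
  show ?thesis
  proof (cases "a1 \<noteq> 0 \<or> a2 \<noteq> 0")
    case True
    show ?thesis
      by (rule exI[of _ a2], rule exI[of _ "-a1"], rule exI[of _ 0])
         (use True c3 in \<open>auto simp: algebra_simps\<close>)
  next
    case F2: False
    show ?thesis
    proof (cases "a3 \<noteq> 0")
      case True
      show ?thesis
        by (rule exI[of _ a3], rule exI[of _ 0], rule exI[of _ "-a1"])
           (use True c2 F2 in \<open>auto simp: algebra_simps\<close>)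
    next
      case F3: False
      show ?thesis
      proof (cases "b1 \<noteq> 0 \<or> b2 \<noteq> 0")
        case True
        show ?thesis
          by (rule exI[of _ b2], rule exI[of _ "-b1"], rule exI[of _ 0])
             (use True F2 F3 in \<open>auto simp: algebra_simps\<close>)
      next
        case F4: False
        show ?thesis
        proof (cases "b3 \<noteq> 0")
          case True
          show ?thesis
            by (rule exI[of _ b3], rule exI[of _ 0], rule exI[of _ "-b1"])
               (use True F2 F3 F4 in \<open>auto simp: algebra_simps\<close>)
        next
          case False
          show ?thesis
            by (rule exI[of _ 1], rule exI[of _ 0], rule exI[of _ 0])
               (use False F2 F3 F4 in auto)
        qed
      qed
    qed
  qed
qed

lemma signature:
  fixes x y z :: "real^6"
  assumes xx: "lform x x < 0" and yy: "lform y y < 0" and zz: "lform z z \<le> 0"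
    and xy: "lform x y = 0" and xz: "lform x z = 0" and yz: "lform y z = 0"
  shows "z = 0"
proof -
  obtain \<alpha> \<beta> \<gamma> where "(\<alpha> \<noteq> 0 \<or> \<beta> \<noteq> 0 \<or> \<gamma> \<noteq> 0) \<and>
    x$4*\<alpha> + y$4*\<beta> + z$4*\<gamma> = 0 \<and> x$5*\<alpha> + y$5*\<beta> + z$5*\<gamma> = 0"
    using kernel3[of "x$4" "y$4" "z$4" "x$5" "y$5" "z$5"] by blast
  hence nz: "\<alpha> \<noteq> 0 \<or> \<beta> \<noteq> 0 \<or> \<gamma> \<noteq> 0"
    and e4: "x$4*\<alpha> + y$4*\<beta> + z$4*\<gamma> = 0" and e5: "x$5*\<alpha> + y$5*\<beta> + z$5*\<gamma> = 0"
    by auto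
  define w where "w = \<alpha> *\<^sub>R x + \<beta> *\<^sub>R y + \<gamma> *\<^sub>R z"
  have w4: "w$4 = 0" using e4 by (simp add: w_def algebra_simps)
  have w5: "w$5 = 0" using e5 by (simp add: w_def algebra_simps)
  have ww: "lform w w = \<alpha>*\<alpha>*lform x x + \<beta>*\<beta>*lform y y + \<gamma>*\<gamma>*lform z z"
    unfolding w_def lform_lin3 lform_lin3r
    using xy xz yz lform_sym[of y x] lform_sym[of z x] lform_sym[of z y] by (simp add: algebra_simps)
  have ws: "lform w w = (w$0)^2 + (w$1)^2 + (w$2)^2 + (w$3)^2"
    using w4 w5 by (simp add: lform_def power2_eq_square)
  have t1: "\<alpha>*\<alpha>*lform x x \<le> 0" using xx by (simp add: mult_nonneg_nonpos)
  have t2: "\<beta>*\<beta>*lform y y \<le> 0" using yy by (simp add: mult_nonneg_nonpos)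
  have t3: "\<gamma>*\<gamma>*lform z z \<le> 0" using zz by (simp add: mult_nonneg_nonpos)
  have ge: "lform w w \<ge> 0" using ws by simp
  have "\<alpha>*\<alpha>*lform x x = 0" using t1 t2 t3 ge ww by linarith
  hence a0: "\<alpha> = 0" using xx by simp
  have "\<beta>*\<beta>*lform y y = 0" using t1 t2 t3 ge ww by linarith
  hence b0: "\<beta> = 0" using yy by simp
  have g0: "\<gamma> \<noteq> 0" using nz a0 b0 by simp
  have "lform w w = 0" using t1 t2 t3 ge ww by linarith
  hence "(w$0)^2 + (w$1)^2 + (w$2)^2 + (w$3)^2 = 0" using ws by simp
  hence "w$0 = 0 \<and> w$1 = 0 \<and> w$2 = 0 \<and> w$3 = 0"
    by (simp add: add_nonneg_eq_0_iff)
  hence w03: "w$0 = 0 \<and> w$1 = 0 \<and> w$2 = 0 \<and> w$3 = 0" .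
  have "w = 0"
  proof (rule vec_eq_iff[THEN iffD2], rule allI)
    fix i :: 6
    show "w$i = 0$i" using exhaust_6[of i] w03 w4 w5 by auto
  qed
  hence "\<gamma> *\<^sub>R z = 0" using a0 b0 by (simp add: w_def)
  thus ?thesis using g0 by simp
qed

lemma sphere_from:
  fixes p k :: "real^6"
  assumes pp: "lform p p = -1" and kk: "lform k k > 0" and kp: "lform k p = 0"
  shows "\<exists>s. is_sphere p s \<and> (\<forall>x. lform x k = 0 \<and> lform x p = 0 \<longrightarrow> lform x s = 0)"
proof -
  define c where "c = 1 / sqrt (lform k k)"
  define s where "s = c *\<^sub>R k + 1 *\<^sub>R p"
  have r: "sqrt (lform k k) * sqrt (lform k k) = lform k k" using kk by simp
  have cc: "c * c = 1 / lform k k" unfolding c_def using r by simp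
  have sq: "c * c * lform k k = 1" using kk cc by simp
  have ss: "lform s s = c*(c*lform k k + lform k p) + (c*lform p k + lform p p)"
    unfolding s_def lform_lin2 lform_lin2r using lform_sym[of p k] by (simp add: algebra_simps)
  have s1: "lform s s = 0" unfolding ss using sq pp kp lform_sym[of p k] by (simp add: algebra_simps)
  have sp: "lform s p = -1" unfolding s_def lform_lin2 using kp pp by simp
  have s2: "s \<noteq> 0"
  proof
    assume "s = 0" with sp show False by simp
  qed
  have s3: "\<forall>x. lform x k = 0 \<and> lform x p = 0 \<longrightarrow> lform x s = 0"
    unfolding s_def lform_lin2r by simp
  have "is_sphere p s" unfolding is_sphere_def using s1 s2 sp by simp
  with s3 show ?thesis by blast
qed

lemma consec: "consecutive I \<Longrightarrow> i \<in> I \<Longrightarrow> j \<in> I \<Longrightarrow> i \<le> k \<Longrightarrow> k \<le> j \<Longrightarrow> k \<in> I"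
  unfolding consecutive_def by blast

lemma propagate:
  assumes cI: "consecutive I" and aI: "a \<in> I" and Pa: "P a"
    and step: "\<And>i. i \<in> I \<Longrightarrow> i + 1 \<in> I \<Longrightarrow> (P i \<longleftrightarrow> P (i+1))"
    and jI: "j \<in> I"
  shows "P j"
proof -
  have up: "a + int n \<in> I \<longrightarrow> P (a + int n)" for n
  proof (induction n)
    case 0 then show ?case using Pa by simp
  next
    case (Suc n)
    show ?case
    proof
      assume h: "a + int (Suc n) \<in> I"
      have h2: "a + int n \<in> I" using consec[OF cI aI h, of "a + int n"] by simp
      with Suc have "P (a + int n)" by simp
      moreover have eq: "a + int (Suc n) = a + int n + 1" by simp
      moreover have "a + int n + 1 \<in> I" using h[unfolded eq] .
      ultimately have "P (a + int n + 1)" using step[OF h2] by blast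
      thus "P (a + int (Suc n))" unfolding eq .
    qed
  qed
  have down: "a - int n \<in> I \<longrightarrow> P (a - int n)" for n
  proof (induction n)
    case 0 then show ?case using Pa by simp
  next
    case (Suc n)
    show ?case
    proof
      assume h: "a - int (Suc n) \<in> I"
      have h2: "a - int n \<in> I" using consec[OF cI h aI, of "a - int n"] by simp
      with Suc have "P (a - int n)" by simp
      moreover have e: "a - int (Suc n) + 1 = a - int n" by simp
      ultimately show "P (a - int (Suc n))" using step[of "a - int (Suc n)"] h h2 by simp
    qed
  qed
  show ?thesis
  proof (cases "j \<ge> a")
    case True
    hence "j = a + int (nat (j - a))" by simp
    thus ?thesis using up jI by metis
  next
    case False
    hence "j = a - int (nat (a - j))" by simp
    thus ?thesis using down jI by metis
  qed
qed

lemma dimle: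
  fixes x :: "real^6"
  assumes "x \<in> span S" "finite S" "card S \<le> 2"
  shows "dim (span (insert x S)) \<le> 2"
proof -
  have "dim (span (insert x S)) = dim S" using assms(1) by (simp add: span_redundant)
  also have "\<dots> \<le> card S" using assms(2) by (rule dim_le_card')
  finally show ?thesis using assms(3) by simp
qed

lemma card2: "card {a, b} \<le> 2"
  by (simp add: card_insert_if)

lemma indep3:
  fixes m1 m2 p :: "real^6"
  assumes d: "dim (span {m1, m2, p}) = 3" and z: "\<alpha> *\<^sub>R m1 + \<beta> *\<^sub>R m2 + \<gamma> *\<^sub>R p = 0"
  shows "\<alpha> = 0 \<and> \<beta> = 0 \<and> \<gamma> = 0"
proof -
  have a: "\<alpha> = 0"
  proof (rule ccontr)
    assume a: "\<alpha> \<noteq> 0"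
    have "\<alpha> *\<^sub>R m1 = - (\<beta> *\<^sub>R m2 + \<gamma> *\<^sub>R p)" by (rule iffD2[OF eq_neg_iff_add_eq_0]) (use z in \<open>simp add: add.assoc\<close>)
    moreover have "(1/\<alpha>) *\<^sub>R (\<alpha> *\<^sub>R m1) = m1" using a by simp
    ultimately have "m1 = (1/\<alpha>) *\<^sub>R (- (\<beta> *\<^sub>R m2 + \<gamma> *\<^sub>R p))" by metis
    hence "m1 \<in> span {m2, p}" by (metis span_scale span_neg span_add span_base insertI1 insertI2 singletonI)
    from dimle[OF this _ card2] d show False by simp
  qed
  have b: "\<beta> = 0"
  proof (rule ccontr)
    assume b: "\<beta> \<noteq> 0"
    have "\<beta> *\<^sub>R m2 = - (\<gamma> *\<^sub>R p)" by (rule iffD2[OF eq_neg_iff_add_eq_0]) (use z a in \<open>simp\<close>)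
    moreover have "(1/\<beta>) *\<^sub>R (\<beta> *\<^sub>R m2) = m2" using b by simp
    ultimately have "m2 = (1/\<beta>) *\<^sub>R (- (\<gamma> *\<^sub>R p))" by metis
    hence "m2 \<in> span {m1, p}" by (metis span_scale span_neg span_base insertI2 singletonI)
    moreover have "{m1, m2, p} = insert m2 {m1, p}" by auto
    ultimately show False using dimle[of m2 "{m1,p}", OF _ _ card2] d by simp
  qed
  have c: "\<gamma> = 0"
  proof (rule ccontr)
    assume c: "\<gamma> \<noteq> 0"
    have "p = 0" using z a b c by simp
    hence "p \<in> span {m1, m2}" by (simp add: span_zero)
    moreover have "{m1, m2, p} = insert p {m1, m2}" by auto
    ultimately show False using dimle[of p "{m1,m2}", OF _ _ card2] d by simp
  qed
  show ?thesis using a b c by simp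
qed

lemma inv_fix:
  assumes rr: "lform r r \<noteq> 0" and fx: "inversion r x = x"
  shows "lform x r = 0"
proof -
  have "(2 * lform x r / lform r r) *\<^sub>R r = 0" using fx unfolding inversion_def by simp
  moreover have "r \<noteq> 0" using rr by auto
  ultimately have "2 * lform x r / lform r r = 0" by simp
  thus ?thesis using rr by simp
qed

lemma point_sphere:
  fixes p v :: "real^6"
  assumes pp: "lform p p = -1" and vp: "lform v p = 0"
  shows "\<exists>s. is_sphere p s \<and> lform v s = 0"
proof -
  obtain \<alpha> \<beta> \<gamma> where "(\<alpha> \<noteq> 0 \<or> \<beta> \<noteq> 0 \<or> \<gamma> \<noteq> 0) \<and>
    p$0*\<alpha> + p$1*\<beta> + p$2*\<gamma> = 0 \<and> v$0*\<alpha> + v$1*\<beta> + v$2*\<gamma> = 0"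
    using kernel3[of "p$0" "p$1" "p$2" "v$0" "v$1" "v$2"] by blast
  hence nz: "\<alpha> \<noteq> 0 \<or> \<beta> \<noteq> 0 \<or> \<gamma> \<noteq> 0"
    and e1: "p$0*\<alpha> + p$1*\<beta> + p$2*\<gamma> = 0" and e2: "v$0*\<alpha> + v$1*\<beta> + v$2*\<gamma> = 0"
    by auto
  define k :: "real^6" where "k = (\<chi> i. if i = 0 then \<alpha> else if i = 1 then \<beta> else if i = 2 then \<gamma> else 0)"
  have k0: "k$0 = \<alpha>" "k$1 = \<beta>" "k$2 = \<gamma>" "k$3 = 0" "k$4 = 0" "k$5 = 0"
    unfolding k_def by simp_all
  have lk: "lform w k = \<alpha> * w$0 + \<beta> * w$1 + \<gamma> * w$2" for w
    unfolding lform_def k0 by simp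
  have "lform k k = \<alpha>*\<alpha> + \<beta>*\<beta> + \<gamma>*\<gamma>" unfolding lk k0 by simp
  also have "\<dots> > 0" using nz
    by (metis add_nonneg_eq_0_iff add_nonneg_nonneg less_eq_real_def mult_eq_0_iff zero_le_square)
  finally have kk: "lform k k > 0" .
  have kp: "lform k p = 0" using e1 lform_sym[of k p] unfolding lk by (simp add: algebra_simps)
  have vk: "lform v k = 0" using e2 unfolding lk by (simp add: algebra_simps)
  from sphere_from[OF pp kk kp] vk vp show ?thesis by blast
qed

lemma main_sph:
  fixes p m1 m2 :: "real^6" and h :: "int \<Rightarrow> real^6"
  assumes pp: "lform p p = -1" and cI: "consecutive I"
    and pts: "\<And>i. i \<in> I \<Longrightarrow> is_point p (h i)"
    and d: "dim (span {m1, m2, p}) = 3"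
    and rr: "\<And>i. i \<in> I \<Longrightarrow> i + 1 \<in> I \<Longrightarrow> lform (h i - h (i+1)) (h i - h (i+1)) \<noteq> 0"
    and orth: "\<And>i x. i \<in> I \<Longrightarrow> i + 1 \<in> I \<Longrightarrow> x \<in> span {m1, m2, p} \<Longrightarrow> lform x (h i - h (i+1)) = 0"
  shows "spherical p I h"
proof (cases "\<exists>a. a \<in> I \<and> a + 1 \<in> I")
  case True
  then obtain a where aI: "a \<in> I" and a1I: "a + 1 \<in> I" by blast
  define u where "u = h a"
  define v where "v = h (a+1)"
  have uu: "lform u u = 0" and up: "lform u p = 0" using pts[OF aI] unfolding u_def is_point_def by auto
  have vv: "lform v v = 0" and vp: "lform v p = 0" using pts[OF a1I] unfolding v_def is_point_def by auto
  obtain \<alpha> \<beta> \<gamma> where "(\<alpha> \<noteq> 0 \<or> \<beta> \<noteq> 0 \<or> \<gamma> \<noteq> 0) \<and>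
    lform m1 p*\<alpha> + lform m2 p*\<beta> + lform p p*\<gamma> = 0 \<and> lform m1 u*\<alpha> + lform m2 u*\<beta> + lform p u*\<gamma> = 0"
    using kernel3[of "lform m1 p" "lform m2 p" "lform p p" "lform m1 u" "lform m2 u" "lform p u"] by blast
  hence nz: "\<alpha> \<noteq> 0 \<or> \<beta> \<noteq> 0 \<or> \<gamma> \<noteq> 0"
    and e1: "lform m1 p*\<alpha> + lform m2 p*\<beta> + lform p p*\<gamma> = 0"
    and e2: "lform m1 u*\<alpha> + lform m2 u*\<beta> + lform p u*\<gamma> = 0"
    by auto
  define k where "k = \<alpha> *\<^sub>R m1 + \<beta> *\<^sub>R m2 + \<gamma> *\<^sub>R p"
  have kp: "lform k p = 0" unfolding k_def lform_lin3 using e1 by (simp add: algebra_simps)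
  have ku: "lform k u = 0" unfolding k_def lform_lin3 using e2 by (simp add: algebra_simps)
  have knz: "k \<noteq> 0" using indep3[OF d, of \<alpha> \<beta> \<gamma>] nz unfolding k_def by auto
  have kspan: "k \<in> span {m1, m2, p}" unfolding k_def
    by (intro span_add span_scale span_base) auto
  have stepk: "lform (h i) k = 0 \<longleftrightarrow> lform (h (i+1)) k = 0" if "i \<in> I" "i + 1 \<in> I" for i
  proof -
    have "lform k (h i - h (i+1)) = 0" using orth[OF that kspan] .
    hence "lform (h i - h (i+1)) k = 0" using lform_sym by metis
    hence "lform (h i) k = lform (h (i+1)) k" unfolding lform_diff by simp
    thus ?thesis by simp
  qed
  have hk: "lform (h j) k = 0" if "j \<in> I" for j
  proof (rule propagate[where P="\<lambda>j. lform (h j) k = 0", OF cI aI])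
    show "lform (h a) k = 0" using ku lform_sym[of u k] unfolding u_def by simp
    show "\<And>i. i \<in> I \<Longrightarrow> i + 1 \<in> I \<Longrightarrow> (lform (h i) k = 0) = (lform (h (i + 1)) k = 0)"
      by (rule stepk)
    show "j \<in> I" by (rule that)
  qed
  have vk: "lform v k = 0" unfolding v_def using hk[OF a1I] .
  define c where "c = lform u v"
  have "lform (u - v) (u - v) = lform u u - 2 * c + lform v v"
    unfolding c_def lform_def by (simp add: algebra_simps)
  moreover have "lform (u - v) (u - v) \<noteq> 0" using rr[OF aI a1I] unfolding u_def v_def .
  ultimately have c0: "c \<noteq> 0" using uu vv by simp
  define t where "t = 1 *\<^sub>R u + (- c) *\<^sub>R v"
  have tt: "lform t t = - 2 * c * c"
    unfolding t_def lform_lin2 lform_lin2r using uu vv lform_sym[of v u] unfolding c_def by (simp add: algebra_simps)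
  have kk: "lform k k > 0"
  proof (rule ccontr)
    assume "\<not> lform k k > 0"
    hence kk0: "lform k k \<le> 0" by simp
    have "lform t t < 0" using tt c0 by (simp add: not_square_less_zero less_le)
    moreover have "lform p p < 0" using pp by simp
    moreover have "lform p t = 0" unfolding t_def lform_lin2r using up vp lform_sym[of u p] lform_sym[of v p] by simp
    moreover have "lform p k = 0" using kp lform_sym[of p k] by simp
    moreover have "lform t k = 0" unfolding t_def lform_lin2 using ku vk lform_sym[of u k] by simp
    ultimately have "k = 0" using signature[of p t k] kk0 by blast
    thus False using knz by simp
  qed
  obtain s where sph: "is_sphere p s" and ss: "\<forall>x. lform x k = 0 \<and> lform x p = 0 \<longrightarrow> lform x s = 0"
    using sphere_from[OF pp kk kp] by blast
  have "\<forall>j\<in>I. lform (h j) s = 0"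
  proof
    fix j assume jI: "j \<in> I"
    have "lform (h j) p = 0" using pts[OF jI] unfolding is_point_def by simp
    thus "lform (h j) s = 0" using ss hk[OF jI] by blast
  qed
  thus ?thesis unfolding spherical_def using sph by blast
next
  case False
  show ?thesis
  proof (cases "I = {}")
    case True
    obtain s where "is_sphere p s" using point_sphere[OF pp, of 0] by auto
    thus ?thesis unfolding spherical_def using True by blast
  next
    case ne: False
    then obtain a where aI: "a \<in> I" by blast
    have all: "j = a" if jI: "j \<in> I" for j
    proof (rule ccontr)
      assume "j \<noteq> a"
      hence "j < a \<or> a < j" by arith
      thus False
      proof
        assume "j < a"
        hence "j + 1 \<in> I" using consec[OF cI jI aI, of "j+1"] by simp
        thus False using False jI by blast
      next
        assume "a < j"
        hence "a + 1 \<in> I" using consec[OF cI aI jI, of "a+1"] by simp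
        thus False using False aI by blast
      qed
    qed
    have "lform (h a) p = 0" using pts[OF aI] unfolding is_point_def by simp
    then obtain s where "is_sphere p s" "lform (h a) s = 0" using point_sphere[OF pp] by blast
    thus ?thesis unfolding spherical_def using all by blast
  qed
qed

theorem corollary2p5:
  fixes p m1 m2 :: "real^6" and I :: "int set" and f g :: "int \<Rightarrow> real^6"
  assumes "lform p p = -1"
    and "ribaucour_pair p I f g"
    and "of_type p I f g m1 m2"
  shows "spherical p I f \<and> spherical p I g"
proof -
  note R = assms(2)[unfolded ribaucour_pair_def discrete_curve_def]
  note T = assms(3)[unfolded of_type_def]
  have cI: "consecutive I" using R by blast
  have d: "dim (span {m1, m2, p}) = 3" using T by blast
  have rr: "lform (f i - f (i+1)) (f i - f (i+1)) \<noteq> 0" if "i \<in> I" "i + 1 \<in> I" for i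
    using R that unfolding M_inversion_def by blast
  have orth: "lform x (f i - f (i+1)) = 0" if "i \<in> I" "i + 1 \<in> I" "x \<in> span {m1, m2, p}" for i x
  proof -
    have "inversion (f i - f (i+1)) x = x" using T that by blast
    thus ?thesis using inv_fix rr[OF that(1,2)] by blast
  qed
  have gf: "g i - g (i+1) = f i - f (i+1)" if "i \<in> I" "i + 1 \<in> I" for i
  proof -
    have "f i - f (i+1) + g (i+1) - g i = 0" using R that by blast
    thus ?thesis by (simp add: algebra_simps)
  qed
  have "spherical p I f"
    by (rule main_sph[where h=f, OF assms(1) cI _ d rr orth]) (use R in blast)+
  moreover have "spherical p I g"
    by (rule main_sph[where h=g, OF assms(1) cI _ d]) (use R rr orth gf in \<open>auto\<close>)
  ultimately show ?thesis by blast
qed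

end
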